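(* For every integer $m\geq 0$, $S_m\subseteq\Lambda_m$.
   Context: $\mathbb{N}=\{1,2,3,\dots\}$, $\mathbb{N}_0=\mathbb{N}\cup\{0\}$. The Collatz map $T:\mathbb{N}\to\mathbb{N}$ is $T(n)=\frac{3n+1}{2}$ if $n$ is odd and $T(n)=\frac{n}{2}$ if $n$ is even; $T^{(k)}$ denotes the $k$-fold composition. The total stopping time is $\sigma_\infty(1)=0$ and, for $n\geq 2$, $\sigma_\infty(n)=\inf\{k\in\mathbb{N}\cup\{\infty\} : T^{(k)}(n)=1\}$. Let $S_0=\{1\}$ and $S_k=\{n\in\mathbb{N}:\sigma_\infty(n)=k\}$ for $k\geq 1$. For $0\leq m\leq 3$ let $\Lambda_m=\{2^m\}$, and for $m\geq 4$ let $\Lambda_m$ be the set of all $n\in\mathbb{N}$ that can be written as $n=\frac{2^m}{3^l}-\sum_{k=1}^{l}\frac{2^{b_k}}{3^k}$ for some integers $l,b_1,\dots,b_l\in\mathbb{N}_0$ with $0\leq l\leq m-3$ and $0\leq b_1<b_2<\cdots<b_l\leq m-4$. *)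

theory Defs
  imports Main "HOL-Library.Extended_Nat"
begin

text \<open>Collatz map T on positive integers (its value at 0 is irrelevant).\<close>
definition T :: "nat \<Rightarrow> nat" where
  "T n = (if odd n then (3 * n + 1) div 2 else n div 2)"

definition sigma_inf :: "nat \<Rightarrow> enat" where
  "sigma_inf n = (if n = 1 then 0
     else if (\<exists>k\<ge>1. (T ^^ k) n = 1) then enat (LEAST k. k \<ge> 1 \<and> (T ^^ k) n = 1)
     else \<infinity>)"

definition S :: "nat \<Rightarrow> nat set" where
  "S k = (if k = 0 then {1} else {n. n \<ge> 1 \<and> sigma_inf n = enat k})"

definition Lambda :: "nat \<Rightarrow> nat set" where
  "Lambda m = (if m \<le> 3 then {2 ^ m}
     else {n. n \<ge> 1 \<and> (\<exists>(l::nat) (b::nat \<Rightarrow> nat). l \<le> m - 3 \<and>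
              (\<forall>i j. 1 \<le> i \<longrightarrow> i < j \<longrightarrow> j \<le> l \<longrightarrow> b i < b j) \<and>
              (\<forall>k. 1 \<le> k \<longrightarrow> k \<le> l \<longrightarrow> b k \<le> m - 4) \<and>
              (of_nat n :: rat) = 2 ^ m / 3 ^ l - (\<Sum>k=1..l. 2 ^ b k / 3 ^ k))})"

end

theory Submission
  imports Defs
begin

lemma T1: "T x = 1 \<Longrightarrow> x = 2 \<or> x = 1" unfolding T_def by (cases "even x") (auto elim!: evenE oddE, presburger?)
lemma T2: "T x = 2 \<Longrightarrow> x = 4 \<or> x = 1" unfolding T_def by (cases "even x") (auto elim!: evenE oddE, presburger?)
lemma T4: "T x = 4 \<Longrightarrow> x = 8" unfolding T_def by (cases "even x") (auto elim!: evenE oddE, presburger?)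

lemma funpow_Suc': "(T ^^ Suc i) n = T ((T ^^ i) n)" by simp

lemma traj:
  "\<exists>l (b::nat\<Rightarrow>nat). l \<le> j \<and> (\<forall>i k. 1 \<le> i \<longrightarrow> i < k \<longrightarrow> k \<le> l \<longrightarrow> b i < b k) \<and>
     (\<forall>k. 1 \<le> k \<longrightarrow> k \<le> l \<longrightarrow> b k < j \<and> odd ((T ^^ b k) x)) \<and>
     (of_nat x :: rat) = 2 ^ j * of_nat ((T ^^ j) x) / 3 ^ l - (\<Sum>k=1..l. 2 ^ b k / 3 ^ k)"
proof (induction j)
  case 0
  show ?case by (rule exI[of _ 0]) simp
next
  case (Suc j)
  then obtain l b where l: "l \<le> j" and mono: "\<forall>i k. 1 \<le> i \<longrightarrow> i < k \<longrightarrow> k \<le> l \<longrightarrow> b i < b k"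
    and bo: "\<forall>k. 1 \<le> k \<longrightarrow> k \<le> l \<longrightarrow> b k < j \<and> odd ((T ^^ b k) x)"
    and eq: "(of_nat x :: rat) = 2 ^ j * of_nat ((T ^^ j) x) / 3 ^ l - (\<Sum>k=1..l. 2 ^ b k / 3 ^ k)"
    by blast
  define y where "y = (T ^^ j) x"
  show ?case
  proof (cases "even y")
    case True
    have "T y = y div 2" using True by (simp add: T_def)
    hence "y = 2 * (T ^^ Suc j) x" using True by (simp add: y_def[symmetric])
    hence "(of_nat y :: rat) = 2 * of_nat ((T ^^ Suc j) x)" by (metis of_nat_mult of_nat_numeral)
    hence "(of_nat x :: rat) = 2 ^ Suc j * of_nat ((T ^^ Suc j) x) / 3 ^ l - (\<Sum>k=1..l. 2 ^ b k / 3 ^ k)"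
      using eq by (simp add: y_def[symmetric])
    thus ?thesis using l mono bo by (intro exI[of _ l] exI[of _ b]) auto
  next
    case False
    have "T y = (3 * y + 1) div 2" using False by (simp add: T_def)
    hence "2 * T y = 3 * y + 1" using False by presburger
    hence "2 * (T ^^ Suc j) x = 3 * y + 1" by (simp add: y_def[symmetric])
    hence "2 * (of_nat ((T ^^ Suc j) x) :: rat) = 3 * of_nat y + 1" by (metis of_nat_mult of_nat_numeral of_nat_add of_nat_1)
    hence "(of_nat y :: rat) = (2 * of_nat ((T ^^ Suc j) x) - 1) / 3" by simp
    define b' where "b' = b(Suc l := j)"
    have sum: "(\<Sum>k=1..Suc l. 2 ^ b' k / 3 ^ k :: rat) = (\<Sum>k=1..l. 2 ^ b k / 3 ^ k) + 2 ^ j / 3 ^ Suc l"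
      by (simp add: b'_def)
    have "(of_nat x :: rat) = 2 ^ Suc j * of_nat ((T ^^ Suc j) x) / 3 ^ Suc l - (\<Sum>k=1..Suc l. 2 ^ b' k / 3 ^ k)"
      unfolding sum using eq \<open>(of_nat y :: rat) = _\<close> by (simp add: y_def[symmetric] field_simps)
    moreover have "\<forall>i k. 1 \<le> i \<longrightarrow> i < k \<longrightarrow> k \<le> Suc l \<longrightarrow> b' i < b' k"
      using mono bo by (auto simp: b'_def le_Suc_eq)
    moreover have "\<forall>k. 1 \<le> k \<longrightarrow> k \<le> Suc l \<longrightarrow> b' k < Suc j \<and> odd ((T ^^ b' k) x)"
      using bo False by (auto simp: b'_def le_Suc_eq y_def)
    ultimately show ?thesis using l by (intro exI[of _ "Suc l"] exI[of _ b']) auto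
  qed
qed

lemma mono_bound:
  assumes "\<forall>i k. 1 \<le> i \<longrightarrow> i < k \<longrightarrow> k \<le> l \<longrightarrow> (b::nat\<Rightarrow>nat) i < b k"
  shows "1 \<le> k \<Longrightarrow> k \<le> l \<Longrightarrow> k - 1 \<le> b k"
proof (induction k)
  case 0 then show ?case by simp
next
  case (Suc k)
  show ?case
  proof (cases "k = 0")
    case True then show ?thesis by simp
  next
    case False
    then have "k - 1 \<le> b k" using Suc by simp
    moreover have "b k < b (Suc k)" using assms Suc.prems False by auto
    ultimately show ?thesis by simp
  qed
qed

lemma S_props:
  assumes "n \<in> S m" "m \<ge> 1"
  shows "(T ^^ m) n = 1" "\<forall>i<m. (T ^^ i) n \<noteq> 1"
proof -
  have n: "n \<ge> 1" "sigma_inf n = enat m" using assms by (auto simp: S_def)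
  have n1: "n \<noteq> 1" using n assms by (auto simp: sigma_inf_def zero_enat_def)
  have ex: "\<exists>k\<ge>1. (T ^^ k) n = 1" using n n1 by (auto simp: sigma_inf_def split: if_splits)
  have mdef: "m = (LEAST k. k \<ge> 1 \<and> (T ^^ k) n = 1)" using n n1 ex by (simp add: sigma_inf_def)
  show "(T ^^ m) n = 1" using LeastI_ex[OF ex[simplified Bex_def[symmetric]]] ex mdef
    by (metis (mono_tags, lifting) LeastI_ex)
  show "\<forall>i<m. (T ^^ i) n \<noteq> 1"
  proof (intro allI impI)
    fix i assume "i < m"
    show "(T ^^ i) n \<noteq> 1"
    proof (cases "i = 0")
      case True then show ?thesis using n1 by simp
    next
      case False
      then show ?thesis using not_less_Least[of i "\<lambda>k. k \<ge> 1 \<and> (T ^^ k) n = 1"] \<open>i < m\<close> mdef by auto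
    qed
  qed
qed

lemma chain:
  assumes "n \<in> S m" "m \<ge> 1"
  shows "(T ^^ (m-1)) n = 2" "m \<ge> 2 \<Longrightarrow> (T ^^ (m-2)) n = 4" "m \<ge> 3 \<Longrightarrow> (T ^^ (m-3)) n = 8"
proof -
  note p = S_props[OF assms]
  obtain m' where m': "m = Suc m'" using assms(2) by (cases m) auto
  have "T ((T ^^ m') n) = 1" using p(1) m' by simp
  moreover have "(T ^^ m') n \<noteq> 1" using p(2) m' by simp
  ultimately have a: "(T ^^ m') n = 2" using T1 by blast
  show "(T ^^ (m-1)) n = 2" using a m' by simp
  show b: "m \<ge> 2 \<Longrightarrow> (T ^^ (m-2)) n = 4"
  proof -
    assume "m \<ge> 2"
    then obtain m'' where m'': "m' = Suc m''" using m' by (cases m') auto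
    have "T ((T ^^ m'') n) = 2" using a m'' by simp
    moreover have "(T ^^ m'') n \<noteq> 1" using p(2) m' m'' by simp
    ultimately show ?thesis using T2 m' m'' by force
  qed
  show "m \<ge> 3 \<Longrightarrow> (T ^^ (m-3)) n = 8"
  proof -
    assume "m \<ge> 3"
    then have "\<exists>k. m = Suc (Suc (Suc k))" by presburger
    then obtain k where k: "m = Suc (Suc (Suc k))" by blast
    have "T ((T ^^ k) n) = 4" using b k by simp
    then show ?thesis using T4 k by force
  qed
qed

theorem mainTheorem3:
  fixes m :: nat
  shows "S m \<subseteq> Lambda m"
proof
  fix n assume nS: "n \<in> S m"
  show "n \<in> Lambda m"
  proof (cases "m = 0")
    case True then show ?thesis using nS by (simp add: S_def Lambda_def)
  next
    case False
    then have m1: "m \<ge> 1" by simp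
    note c = chain[OF nS m1]
    show ?thesis
    proof (cases "m \<le> 3")
      case True
      then have "m = 1 \<or> m = 2 \<or> m = 3" using m1 by auto
      then have "n = 2 ^ m" using c by auto
      then show ?thesis using True by (simp add: Lambda_def)
    next
      case False
      have n1: "n \<ge> 1" using nS by (simp add: S_def split: if_splits)
      have Tm: "(T ^^ m) n = 1" using S_props[OF nS m1] by simp
      obtain l b where l: "l \<le> m" and mono: "\<forall>i k. 1 \<le> i \<longrightarrow> i < k \<longrightarrow> k \<le> l \<longrightarrow> b i < b k"
        and bo: "\<forall>k. 1 \<le> k \<longrightarrow> k \<le> l \<longrightarrow> b k < m \<and> odd ((T ^^ b k) n)"
        and eq: "(of_nat n :: rat) = 2 ^ m * of_nat ((T ^^ m) n) / 3 ^ l - (\<Sum>k=1..l. 2 ^ b k / 3 ^ k)"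
        using traj[of m n] by blast
      have bb: "\<forall>k. 1 \<le> k \<longrightarrow> k \<le> l \<longrightarrow> b k \<le> m - 4"
      proof (intro allI impI)
        fix k assume k: "1 \<le> k" "k \<le> l"
        have "b k < m" "odd ((T ^^ b k) n)" using bo k by auto
        moreover have "b k \<noteq> m - 1" "b k \<noteq> m - 2" "b k \<noteq> m - 3"
          using c False calculation by auto
        ultimately show "b k \<le> m - 4" using False by linarith
      qed
      have "l \<le> m - 3"
      proof (cases "l = 0")
        case True then show ?thesis by simp
      next
        case False
        have "l - 1 \<le> b l" using mono_bound[OF mono, of l] False by simp
        moreover have "b l \<le> m - 4" using bb False by simp
        ultimately show ?thesis using \<open>\<not> m \<le> 3\<close> by linarith
      qed
      moreover have "(of_nat n :: rat) = 2 ^ m / 3 ^ l - (\<Sum>k=1..l. 2 ^ b k / 3 ^ k)" using eq Tm by simp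
      ultimately show ?thesis using False n1 mono bb unfolding Lambda_def by auto
    qed
  qed
qed

end
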